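(* Let $k>1/2$ be real, and let $d$ be a positive odd integer. With the notation of the context, for each $1\le j\le R$, \[ \mathcal{N}_j(d,2k-1)^{\frac{2k}{2k-1}} \le \mathcal{N}_j(d,2k)\,\frac{(1+e^{-\ell_j})^{\frac{2k}{2k-1}}}{(1-e^{-\ell_j})^2} + \mathcal{Q}_j(d), \] where $\mathcal{Q}_j(d)=\Big(\frac{124k^2\,\mathcal{P}_j(d)}{\ell_j}\Big)^{2r_k\ell_j}$ with $r_k=1+\lceil \frac{k}{2k-1}\rceil$.
   Context: $f$ is a fixed holomorphic Hecke eigenform of weight $\kappa$ for $SL_2(\mathbb{Z})$ with Fourier expansion $f(z)=\sum_{n\ge1}\lambda_f(n)n^{(\kappa-1)/2}e(nz)$, where $\lambda_f(n)$ are real, $\lambda_f(1)=1$, $|\lambda_f(n)|\le d(n)$. $\chi_{8d}=\left(\frac{8d}{\cdot}\right)$ is the Kronecker symbol. $X$ is large; $N,M$ are large natural numbers depending only on $k$. Define even natural numbers $\ell_1=2\lceil N\log\log X\rceil$ and $\ell_{j+1}=2\lceil N\log \ell_j\rceil$, and let $R$ be the largest natural number with $\ell_R>10^M$; $M$ is taken large enough that $\ell_j>\ell_{j+1}^2$ for $1\le j\le R-1$. Let $P_1$ be the set of odd primes $\le X^{1/\ell_1^2}$ and, for $2\le j\le R$, $P_j$ the set of primes in $(X^{1/\ell_{j-1}^2},X^{1/\ell_j^2}]$. Set $\mathcal{P}_j(d)=\sum_{p\in P_j}\lambda_f(p)\chi_{8d}(p)/\sqrt p$ (a real number). For an integer $\ell\ge0$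 and real $x$, $E_\ell(x)=\sum_{i=0}^{\ell}x^i/i!$, and for real $\alpha$, $\mathcal{N}_j(d,\alpha)=E_{\ell_j}(\alpha\mathcal{P}_j(d))$, which is positive since $\ell_j$ is even. *)

theory Defs
  imports Complex_Main "HOL-Number_Theory.Number_Theory"
begin

text \<open>ell N X j is ell_j (index j starting at 1; value at 0 is irrelevant).\<close>
fun ell :: "nat \<Rightarrow> real \<Rightarrow> nat \<Rightarrow> nat" where
  "ell N X 0 = 0"
| "ell N X (Suc 0) = 2 * nat \<lceil>real N * ln (ln X)\<rceil>"
| "ell N X (Suc (Suc j)) = 2 * nat \<lceil>real N * ln (real (ell N X (Suc j)))\<rceil>"

definition bigR :: "nat \<Rightarrow> nat \<Rightarrow> real \<Rightarrow> nat" where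
  "bigR N M X = (GREATEST r. r \<ge> 1 \<and> ell N X r > 10 ^ M)"

definition Pset :: "nat \<Rightarrow> real \<Rightarrow> nat \<Rightarrow> nat set" where
  "Pset N X j = (if j = 1
     then {p. prime p \<and> odd p \<and> real p \<le> X powr (1 / (real (ell N X 1))^2)}
     else {p. prime p \<and> X powr (1 / (real (ell N X (j - 1)))^2) < real p
                      \<and> real p \<le> X powr (1 / (real (ell N X j))^2)})"

text \<open>Kronecker symbol chi_{8d}(p) = (8d / p) evaluated at a prime p:
  0 at p = 2, the Legendre symbol at odd primes.\<close>
definition chi8 :: "nat \<Rightarrow> nat \<Rightarrow> real" where
  "chi8 d p = (if p = 2 then 0 else real_of_int (Legendre (int (8 * d)) (int p)))"

definition calP :: "(nat \<Rightarrow> real) \<Rightarrow> nat \<Rightarrow> real \<Rightarrow> nat \<Rightarrow> nat \<Rightarrow> real" where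
  "calP lam N X j d = (\<Sum>p\<in>Pset N X j. lam p * chi8 d p / sqrt (real p))"

definition E :: "nat \<Rightarrow> real \<Rightarrow> real" where
  "E l x = (\<Sum>i=0..l. x ^ i / fact i)"

definition calN :: "(nat \<Rightarrow> real) \<Rightarrow> nat \<Rightarrow> real \<Rightarrow> nat \<Rightarrow> nat \<Rightarrow> real \<Rightarrow> real" where
  "calN lam N X j d \<alpha> = E (ell N X j) (\<alpha> * calP lam N X j d)"

definition rk :: "real \<Rightarrow> nat" where
  "rk k = 1 + nat \<lceil>k / (2 * k - 1)\<rceil>"

definition calQ :: "real \<Rightarrow> (nat \<Rightarrow> real) \<Rightarrow> nat \<Rightarrow> real \<Rightarrow> nat \<Rightarrow> nat \<Rightarrow> real" where
  "calQ k lam N X j d = (124 * k^2 * calP lam N X j d / real (ell N X j)) ^ (2 * rk k * ell N X j)"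

end

theory Submission
  imports Defs
begin

lemma pw1: "real n * y ^ (n - Suc 0) * y = real n * (y::real) ^ n" by (cases n) auto
lemma pw2: "real n * (- y) ^ (n - Suc 0) * y = - (real n * (- y::real) ^ n)" by (cases n) auto

lemma E_Suc: "E (Suc n) y = E n y + y ^ Suc n / fact (Suc n)"
  unfolding E_def by simp

lemma E_deriv: "DERIV (E l) y :> (E l y - y ^ l / fact l)"
proof (induction l arbitrary: y)
  case 0
  have "E 0 = (\<lambda>_. 1)" by (auto simp: E_def)
  then show ?case by simp
next
  case (Suc n)
  have eq: "E (Suc n) = (\<lambda>y. E n y + y ^ Suc n / fact (Suc n))" by (auto simp: E_Suc)
  have "DERIV (\<lambda>y. E n y + y ^ Suc n / fact (Suc n)) y :> ((E n y - y ^ n / fact n) + real (Suc n) * y ^ n / fact (Suc n))"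
    by (rule DERIV_cong, (rule Suc.IH derivative_intros)+) (cases n, simp_all)
  moreover have "real (Suc n) * y ^ n / fact (Suc n) = y ^ n / fact n"
    by (simp add: fact_Suc field_simps pw1 pw2 del: of_nat_Suc)
  ultimately show ?case by (simp add: eq E_Suc)
qed

lemma E_ge1: "y \<ge> 0 \<Longrightarrow> E l y \<ge> 1"
proof -
  assume y: "y \<ge> 0"
  have "E l y = 1 + (\<Sum>i=1..l. y ^ i / fact i)"
    unfolding E_def by (simp add: sum.atLeast_Suc_atMost)
  moreover have "(\<Sum>i=1..l. y ^ i / fact i) \<ge> 0" using y by (intro sum_nonneg) auto
  ultimately show ?thesis by simp
qed

lemma E_term: "y \<ge> 0 \<Longrightarrow> y ^ l / fact l \<le> E l y"
  unfolding E_def by (rule member_le_sum) auto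

lemma F1: assumes "y \<ge> 0" shows "E l y * exp (- y) \<le> 1"
proof -
  have "E l y * exp (- y) \<le> E l 0 * exp (- 0)"
  proof (rule DERIV_nonpos_imp_nonincreasing[where f = "\<lambda>t. E l t * exp (- t)", OF assms])
    fix t :: real assume t: "0 \<le> t" "t \<le> y"
    have "DERIV (\<lambda>t. E l t * exp (- t)) t :> ((E l t - t ^ l / fact l) * exp (- t) + E l t * (exp (-t) * (-1)))"
      by (rule DERIV_cong, (rule E_deriv derivative_intros)+) (cases l, simp_all add: algebra_simps)
    moreover have "(E l t - t ^ l / fact l) * exp (- t) + E l t * (exp (-t) * (-1)) = - (t ^ l / fact l * exp (-t))"
      by (simp add: algebra_simps)
    moreover have "t ^ l / fact l * exp (-t) \<ge> 0" using t by simp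
    ultimately show "\<exists>d. DERIV (\<lambda>t. E l t * exp (- t)) t :> d \<and> d \<le> 0" by force
  qed
  moreover have "E l 0 = 1" unfolding E_def by (simp add: power_0_left sum.atLeast_Suc_atMost)
  ultimately show ?thesis by simp
qed

lemma F2: assumes "y \<le> 0" "even l" shows "E l y * exp (- y) \<ge> 1"
proof -
  have "E l y * exp (- y) \<ge> E l 0 * exp (- 0)"
  proof (rule DERIV_nonpos_imp_nonincreasing[where f = "\<lambda>t. E l t * exp (- t)", OF assms(1)])
    fix t :: real assume t: "y \<le> t" "t \<le> 0"
    have "DERIV (\<lambda>t. E l t * exp (- t)) t :> ((E l t - t ^ l / fact l) * exp (- t) + E l t * (exp (-t) * (-1)))"
      by (rule DERIV_cong, (rule E_deriv derivative_intros)+) (cases l, simp_all add: algebra_simps)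
    moreover have "(E l t - t ^ l / fact l) * exp (- t) + E l t * (exp (-t) * (-1)) = - (t ^ l / fact l * exp (-t))"
      by (simp add: algebra_simps)
    moreover have "t ^ l / fact l * exp (-t) \<ge> 0" using assms(2) by (simp add: zero_le_even_power)
    ultimately show "\<exists>d. DERIV (\<lambda>t. E l t * exp (- t)) t :> d \<and> d \<le> 0" by force
  qed
  moreover have "E l 0 = 1" unfolding E_def by (simp add: power_0_left sum.atLeast_Suc_atMost)
  ultimately show ?thesis by simp
qed

lemma dpow: "DERIV (\<lambda>t::real. t ^ (l+1) / fact (l+1)) t :> t ^ l / fact l"
proof -
  have "DERIV (\<lambda>t. t ^ (l+1) / fact (l+1)) t :> real (l+1) * t ^ (l+1 - Suc 0) / fact (l+1)"
    by (rule DERIV_cdivide[OF DERIV_pow])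
  moreover have "real (l+1) * t ^ l / fact (l+1) = t ^ l / fact l"
    by (simp add: fact_Suc del: of_nat_Suc)
  ultimately show ?thesis by simp
qed

lemma dpowm: "DERIV (\<lambda>t::real. (- t) ^ (l+1) / fact (l+1)) t :> - ((- t) ^ l / fact l)"
  by (rule DERIV_mirror[THEN iffD1, OF dpow[of l "- t"]])

lemma F3: assumes "y \<ge> 0" shows "E l y * exp (- y) + y ^ (l+1) / fact (l+1) \<ge> 1"
proof -
  let ?f = "\<lambda>t. E l t * exp (- t) + t ^ (l+1) / fact (l+1)"
  have "?f 0 \<le> ?f y"
  proof (rule DERIV_nonneg_imp_nondecreasing[where f = ?f, OF assms])
    fix t :: real assume t: "0 \<le> t" "t \<le> y"
    have "DERIV ?f t :> t ^ l / fact l * (1 - exp (-t))"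
      by (rule DERIV_cong, (rule E_deriv dpow derivative_intros)+) (simp add: algebra_simps diff_divide_distrib)
    moreover have "t ^ l / fact l * (1 - exp (-t)) \<ge> 0" using t by simp
    ultimately show "\<exists>d. DERIV ?f t :> d \<and> d \<ge> 0" by force
  qed
  moreover have "E l 0 = 1" unfolding E_def by (simp add: power_0_left sum.atLeast_Suc_atMost)
  ultimately show ?thesis by simp
qed

lemma F4: assumes "y \<le> 0" "even l" shows "E l y * exp (- y) - (- y) ^ (l+1) / fact (l+1) * exp (- y) \<le> 1"
proof -
  let ?f = "\<lambda>t. E l t * exp (- t) - (- t) ^ (l+1) / fact (l+1) * exp (- t)"
  have "?f y \<le> ?f 0"
  proof (rule DERIV_nonneg_imp_nondecreasing[where f = ?f, OF assms(1)])
    fix t :: real assume t: "y \<le> t" "t \<le> 0"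
    have "DERIV ?f t :> (- t) ^ (l+1) / fact (l+1) * exp (-t) + ((- t) ^ l - t ^ l) / fact l * exp (-t)"
      by (rule DERIV_cong, (rule E_deriv dpowm derivative_intros)+) (simp add: algebra_simps diff_divide_distrib)
    moreover have "(- t) ^ l = t ^ l" using assms(2) by simp
    moreover have "(- t) ^ (l+1) / fact (l+1) * exp (-t) \<ge> 0" using t
      by (intro mult_nonneg_nonneg divide_nonneg_nonneg zero_le_power) auto
    ultimately show "\<exists>d. DERIV ?f t :> d \<and> d \<ge> 0" by force
  qed
  moreover have "E l 0 = 1" unfolding E_def by (simp add: power_0_left sum.atLeast_Suc_atMost)
  ultimately show ?thesis by simp
qed


lemma E_le_exp: "y \<ge> 0 \<Longrightarrow> E l y \<le> exp y"
  using F1[of y l] by (simp add: exp_minus field_simps)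

lemma E_pos: assumes "even l" shows "E l y > 0"
proof (cases "y \<ge> 0")
  case True then show ?thesis using E_ge1[of y l] by simp
next
  case False
  then have "E l y * exp (- y) \<ge> 1" using F2[of y l] assms by simp
  then show ?thesis by (metis exp_gt_zero not_less mult_nonpos_nonneg less_le_not_le zero_less_one order_less_le_trans)
qed

lemma fact_lb: "real n ^ n / fact n \<le> exp (real n)"
  using E_term[of "real n" n] E_le_exp[of "real n" n] by simp

lemma G: assumes "n \<ge> 1" "v \<ge> 0" "v \<le> real n / 30"
  shows "v ^ n * exp v / fact n \<le> exp (- real n)"
proof -
  have np: "real n > 0" using assms by simp
  have f: "fact n \<ge> real n ^ n / exp (real n)" using fact_lb[of n] by (simp add: field_simps)
  have fp: "real n ^ n / exp (real n) > 0" using np by simp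
  have "v ^ n * exp v / fact n \<le> v ^ n * exp v / (real n ^ n / exp (real n))"
    by (rule divide_left_mono[OF f]) (use fp assms in auto)
  also have "\<dots> = (v / real n) ^ n * exp v * exp (real n)" by (simp add: field_simps power_divide)
  also have "\<dots> \<le> (1/30) ^ n * exp (real n / 30) * exp (real n)"
  proof -
    have "(v / real n) ^ n \<le> (1/30) ^ n"
      by (rule power_mono) (use assms np in \<open>auto simp: field_simps\<close>)
    moreover have "exp v \<le> exp (real n / 30)" using assms by simp
    ultimately show ?thesis by (intro mult_right_mono mult_mono) auto
  qed
  also have "\<dots> = (exp (61/30) / 30) ^ n * exp (- real n)"
  proof -
    have "exp (real n / 30) * exp (real n) = exp (61/30) ^ n * exp (- real n)"
      by (simp add: exp_add[symmetric] exp_of_nat_mult[symmetric] field_simps)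
    then show ?thesis by (simp add: power_divide field_simps)
  qed
  also have "\<dots> \<le> 1 ^ n * exp (- real n)"
  proof -
    have "exp (61/30) \<le> exp (3::real)" by simp
    also have "exp (3::real) = exp 1 ^ 3" using exp_of_nat_mult[of 3 1] by simp
    also have "\<dots> \<le> 3 ^ 3" by (rule power_mono[OF exp_le]) auto
    finally have "exp (61/30) / 30 \<le> (1::real)" by simp
    then show ?thesis by (intro mult_right_mono power_mono) auto
  qed
  finally show ?thesis by simp
qed

lemma exp31: "exp (1/31) \<le> (16/15 :: real)"
proof (rule ccontr)
  assume "\<not> ?thesis"
  then have h: "exp (1/31) > (16/15::real)" by simp
  have "1 + real 31 * (1/15) \<le> (1 + 1/15 :: real) ^ 31" by (rule Bernoulli_inequality) auto
  also have "\<dots> < exp (1/31) ^ 31" by (rule power_strict_mono) (use h in auto)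
  also have "\<dots> = exp 1" using exp_of_nat_mult[of 31 "1/31::real"] by simp
  finally show False using exp_le by simp
qed


lemma core:
  fixes k x :: real and l :: nat
  assumes k: "k > 1/2" and ev: "even l"
  shows "E l ((2*k-1) * x) powr (2*k/(2*k-1)) \<le>
     E l (2*k*x) * ((1 + exp (- real l)) powr (2*k/(2*k-1)) / (1 - exp (- real l))^2)
     + (124 * k^2 * x / real l) ^ (2 * rk k * l)"
proof (cases "l = 0")
  case True
  then show ?thesis by (simp add: E_def)
next
  case False
  define a where "a = 2*k-1"
  define b where "b = 2*k"
  define p where "p = 2*k/(2*k-1)"
  define \<epsilon> where "\<epsilon> = exp (- real l)"
  define C where "C = (1 + \<epsilon>) powr p / (1 - \<epsilon>)^2"
  define A where "A = E l (a*x)"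
  define B where "B = E l (b*x)"
  define Q where "Q = (124 * k^2 * x / real l) ^ (2 * rk k * l)"
  have lpos: "real l \<ge> 1" using False by simp
  have apos: "a > 0" and bpos: "b > 0" and ab: "a < b" using k by (auto simp: a_def b_def)
  have p: "p > 0" "a * p = b" using k by (auto simp: p_def a_def b_def field_simps)
  have eps: "\<epsilon> > 0" "\<epsilon> < 1" using lpos by (auto simp: \<epsilon>_def)
  have Apos: "A > 0" and Bpos: "B > 0" using E_pos[OF ev] by (auto simp: A_def B_def)
  have evN: "even (2 * rk k * l)" by simp
  have Qnn: "Q \<ge> 0" unfolding Q_def using evN by (simp add: zero_le_even_power)
  have Cnn: "C \<ge> 0" unfolding C_def by simp
  have goal: "A powr p \<le> B * C + Q"
  proof (cases "b * \<bar>x\<bar> \<le> real l / 30")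
    case True note small = this
    have ax: "a * \<bar>x\<bar> \<le> real l / 30"
      using small ab by (smt (verit) abs_ge_zero mult_right_mono)
    have G1: "v ^ (l+1) * exp v / fact (l+1) \<le> \<epsilon>" if "0 \<le> v" "v \<le> real l / 30" for v
    proof -
      have "v ^ (l+1) * exp v / fact (l+1) \<le> exp (- real (l+1))"
        by (rule G) (use that in auto)
      also have "\<dots> \<le> \<epsilon>" unfolding \<epsilon>_def by simp
      finally show ?thesis .
    qed
    show ?thesis
    proof (cases "x \<ge> 0")
      case True
      have "A \<le> exp (a*x)" unfolding A_def by (rule E_le_exp) (use True apos in simp)
      then have "A powr p \<le> exp (a*x) powr p" by (intro powr_mono2) (use Apos p in auto)
      also have "\<dots> = exp (b*x)" using p by (simp add: exp_powr_real algebra_simps)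
      also have "\<dots> \<le> B / (1 - \<epsilon>)"
      proof -
        have bx: "0 \<le> b*x" "b*x \<le> real l / 30" using True bpos small by auto
        have "(b*x) ^ (l+1) / fact (l+1) \<le> (b*x) ^ (l+1) * exp (b*x) / fact (l+1)"
        proof (rule divide_right_mono)
          have "(b*x) ^ (l+1) * 1 \<le> (b*x) ^ (l+1) * exp (b*x)"
            using bx by (intro mult_left_mono) auto
          then show "(b*x) ^ (l+1) \<le> (b*x) ^ (l+1) * exp (b*x)" by simp
        qed simp
        also have "\<dots> \<le> \<epsilon>" by (rule G1) (use bx in auto)
        finally have "B * exp (- (b*x)) \<ge> 1 - \<epsilon>" using F3[OF bx(1), of l] unfolding B_def by simp
        then have "B \<ge> (1 - \<epsilon>) * exp (b*x)" by (simp add: exp_minus field_simps)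
        then show ?thesis using eps by (simp add: field_simps)
      qed
      also have "\<dots> \<le> B * C"
      proof -
        have "1 \<le> (1 + \<epsilon>) powr p" using eps p by (intro ge_one_powr_ge_zero) auto
        moreover have "(1 - \<epsilon>)^2 \<le> 1 - \<epsilon>" using eps by (simp add: power2_eq_square)
        ultimately have "1 / (1 - \<epsilon>) \<le> C" unfolding C_def using eps
          by (smt (verit) frac_le power2_eq_square mult_pos_pos)
        then have "B * (1 / (1 - \<epsilon>)) \<le> B * C" using Bpos by (intro mult_left_mono) auto
        then show ?thesis by simp
      qed
      finally show ?thesis using Qnn by simp
    next
      case False
      have ay: "a*x \<le> 0" using False apos by (simp add: mult_nonneg_nonpos)
      have av: "0 \<le> - (a*x)" "- (a*x) \<le> real l / 30" using ax False ay by auto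
      have "(- (a*x)) ^ (l+1) / fact (l+1) * exp (- (a*x)) \<le> \<epsilon>"
        using G1[OF av] by simp
      then have "A * exp (- (a*x)) \<le> 1 + \<epsilon>" using F4[OF ay ev] unfolding A_def by simp
      then have "A \<le> exp (a*x) * (1 + \<epsilon>)" by (simp add: exp_minus field_simps)
      then have "A powr p \<le> (exp (a*x) * (1 + \<epsilon>)) powr p" by (intro powr_mono2) (use Apos p in auto)
      also have "\<dots> = exp (b*x) * (1+\<epsilon>) powr p" using p eps by (simp only: powr_mult exp_powr_real) (simp add: algebra_simps)
      also have "\<dots> \<le> B * (1+\<epsilon>) powr p"
      proof -
        have bxn: "b*x \<le> 0" using False bpos by (simp add: mult_nonneg_nonpos)
        have "B * exp (- (b*x)) \<ge> 1" using F2[OF bxn ev] unfolding B_def by simp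
        then have "exp (b*x) \<le> B" by (simp add: exp_minus field_simps)
        then show ?thesis by (intro mult_right_mono) auto
      qed
      also have "\<dots> \<le> B * C"
      proof -
        have "(1 - \<epsilon>)^2 \<le> 1" "(1 - \<epsilon>)^2 > 0" using eps by (auto simp: power_le_one)
        then have "(1+\<epsilon>) powr p \<le> C" unfolding C_def
          by (simp add: le_divide_eq mult_left_le)
        then show ?thesis using Bpos by simp
      qed
      finally show ?thesis using Qnn by simp
    qed
  next
    case False note big = this
    define u where "u = \<bar>x\<bar>"
    define w where "w = 124 * k^2 * u / real l"
    define s where "s = a * real l / (124 * k^2)"
    have upos: "u > real l / (60 * k)" using big k unfolding u_def b_def by (simp add: field_simps)
    have w1: "w \<ge> 31/30"
    proof -
      have "w = 124 * k^2 * u / real l" by (simp add: w_def)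
      moreover have "124 * k^2 * u / real l \<ge> 124 * k^2 * (real l / (60*k)) / real l"
        using upos k lpos by (intro divide_right_mono mult_left_mono) auto
      moreover have "124 * k^2 * (real l / (60*k)) / real l = 124 * k / 60" using k lpos by (simp add: field_simps power2_eq_square)
      ultimately show ?thesis using k by simp
    qed
    have spos: "s > 0" using apos lpos k unfolding s_def by simp
    have zsw: "a * u = s * w" unfolding s_def w_def using k lpos by (simp add: field_simps power2_eq_square)
    have "A \<le> (\<Sum>i=0..l. \<bar>a*x\<bar> ^ i / fact i)"
      unfolding A_def E_def by (rule order_trans[OF abs_ge_self sum_abs[THEN order_trans]]) (auto simp: power_abs)
    also have "\<dots> = (\<Sum>i=0..l. s ^ i * w ^ i / fact i)"
      using apos by (simp add: u_def[symmetric] abs_mult zsw power_mult_distrib)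
    also have "\<dots> \<le> (\<Sum>i=0..l. w ^ l * (s ^ i / fact i))"
    proof (rule sum_mono)
      fix i assume "i \<in> {0..l}"
      then have "w ^ i \<le> w ^ l" using w1 by (intro power_increasing) auto
      then show "s ^ i * w ^ i / fact i \<le> w ^ l * (s ^ i / fact i)"
        using spos by (simp add: field_simps mult_left_mono)
    qed
    also have "\<dots> = w ^ l * E l s" by (simp add: E_def sum_distrib_left)
    also have "\<dots> \<le> w ^ l * exp s" using E_le_exp[of s l] spos w1 by (intro mult_left_mono) auto
    finally have Ale: "A \<le> w ^ l * exp s" .
    have wpos: "w > 0" using w1 by simp
    have "A powr p \<le> (w ^ l * exp s) powr p" by (intro powr_mono2) (use Apos p Ale in auto)
    also have "\<dots> = w powr (real l * p) * exp (real l / (62 * k))"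
    proof -
      have "(w ^ l) powr p = w powr (real l * p)" using wpos by (simp add: powr_realpow[symmetric] powr_powr)
      moreover have "exp s powr p = exp (real l / (62 * k))"
        using k unfolding exp_powr_real s_def p_def a_def by (simp add: field_simps power2_eq_square)
      ultimately show ?thesis using wpos by (simp add: powr_mult)
    qed
    also have "\<dots> \<le> w powr (real l * p) * (w^2) ^ l"
    proof -
      have "exp (1 / (62 * k)) \<le> exp (1/31)" using k by (simp add: field_simps)
      also have "\<dots> \<le> 16/15" by (rule exp31)
      also have "\<dots> \<le> w^2"
      proof -
        have "(31/30)^2 \<le> w^2" using w1 by (intro power_mono) auto
        moreover have "(31/30::real)^2 \<ge> 16/15" by (simp add: power2_eq_square)
        ultimately show ?thesis by linarith
      qed
      finally have e: "exp (1 / (62 * k)) \<le> w^2" .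
      have "exp (real l / (62 * k)) = exp (1 / (62 * k)) ^ l"
        using exp_of_nat_mult[of l "1 / (62 * k)"] by simp
      also have "\<dots> \<le> (w^2) ^ l" using e by (intro power_mono) auto
      finally show ?thesis by (intro mult_left_mono) auto
    qed
    also have "\<dots> = w powr (real l * p + 2 * real l)"
    proof -
      have "w powr (2 * real l) = w powr (real (2 * l))" by simp
      also have "\<dots> = w ^ (2 * l)" using wpos by (rule powr_realpow)
      also have "\<dots> = (w^2) ^ l" by (rule power_mult)
      finally show ?thesis by (simp only: powr_add)
    qed
    also have "\<dots> \<le> w powr real (2 * rk k * l)"
    proof (rule powr_mono)
      have "real (rk k) \<ge> 1 + k / (2*k-1)" unfolding rk_def using real_nat_ceiling_ge[of "k / (2*k-1)"] by simp
      moreover have "p = 2 * (k / (2*k-1))" unfolding p_def by simp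
      ultimately have "2 * real (rk k) \<ge> p + 2" by linarith
      then have "real l * (2 * real (rk k)) \<ge> real l * (p + 2)" using lpos by (intro mult_left_mono) auto
      then show "real l * p + 2 * real l \<le> real (2 * rk k * l)" by (simp add: algebra_simps)
    qed (use w1 in auto)
    also have "\<dots> = w ^ (2 * rk k * l)" using wpos by (rule powr_realpow)
    also have "\<dots> = Q"
    proof -
      have "\<bar>124 * k^2 * x / real l\<bar> = w" unfolding w_def u_def using lpos by (simp add: abs_mult)
      then show ?thesis unfolding Q_def using power_even_abs[OF evN, of "124 * k^2 * x / real l"] by simp
    qed
    finally show ?thesis using Bpos Cnn by (smt (verit) mult_nonneg_nonneg)
  qed
  then show ?thesis unfolding A_def B_def C_def Q_def p_def \<epsilon>_def a_def b_def .
qed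

lemma ell_even: "even (ell N X j)"
  by (induction N X j rule: ell.induct) auto

theorem lemma3p4:
  fixes k :: real
  assumes "k > 1 / 2"
  shows "\<exists>N0. \<forall>N\<ge>N0. \<exists>M0. \<forall>M\<ge>M0. \<exists>X0. \<forall>X\<ge>X0.
    \<forall>lam :: nat \<Rightarrow> real. lam 1 = 1 \<longrightarrow>
      (\<forall>n\<ge>1. \<bar>lam n\<bar> \<le> real (card {m. m dvd n})) \<longrightarrow>
    (\<forall>d :: nat. d > 0 \<longrightarrow> odd d \<longrightarrow>
     (\<forall>j\<in>{1..bigR N M X}.
        calN lam N X j d (2 * k - 1) powr (2 * k / (2 * k - 1))
        \<le> calN lam N X j d (2 * k)
             * ((1 + exp (- real (ell N X j))) powr (2 * k / (2 * k - 1))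
                / (1 - exp (- real (ell N X j)))^2)
          + calQ k lam N X j d))"
  unfolding calN_def calQ_def
  using core[OF assms ell_even] by blast

end
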